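(* Let $Z$ be a reflection positive volume-dependent field theory, let $\Sigma_0,\Sigma_1$ be nonempty closed $(n-1)$-manifolds, and for each $\lambda\in\Lambda_{\Sigma_0,\Sigma_1}$ let $f_\lambda:\mathcal H^\lambda_{\Sigma_0}\to\mathcal H^\lambda_{\Sigma_1}$ be a linear map. Then the not necessarily bounded operator $f^{Hilb}=\sum_{\lambda\in\Lambda_{\Sigma_0,\Sigma_1}}\iota_{1,\lambda}\circ f_\lambda\circ\pi_{0,\lambda}$ from $\mathcal H_{\Sigma_0}$ to $\mathcal H_{\Sigma_1}$ is induced from a morphism of nuclear pairs $(\check f,\hat f)$ from $\check E_{\Sigma_0}\subset\mathcal H_{\Sigma_0}\subset\hat E_{\Sigma_0}$ to $\check E_{\Sigma_1}\subset\mathcal H_{\Sigma_1}\subset\hat E_{\Sigma_1}$ (i.e. continuous $\check f:\check E_{\Sigma_0}\to\check E_{\Sigma_1}$, $\hat f:\hat E_{\Sigma_0}\to\hat E_{\Sigma_1}$ commuting with the inclusions, with $f^{Hilb}$ equal to $\check f$ on $\check E_{\Sigma_0}$) if and only if for all $t>0$ there exists $C>0$ with $\|f_\lambda\|<Ce^{t\lambda}$ for every $\lambda\in\Lambda_{\Sigma_0,\Sigma_1}$.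
   Context: A reflection positive volume-dependent field theory $Z$ (a nuclear, holomorphic, coherent symmetric monoidal functor from $n$-dimensional bordisms of germs equipped with complex densities of positive real part to nuclear pairs — continuous injective dense maps from nuclear dual Fréchet to nuclear Fréchet spaces — which is equivariant for reflection/conjugation and sends reflection-fixed objects to Hermitian nuclear pairs) assigns to each closed $(n-1)$-manifold $\Sigma$ (using a fixed translation-invariant density $\nu_\Sigma\wedge dt$ on $\Sigma\times\mathbb R$, $\nu_\Sigma$ positive of volume 1) a Hilbert space $\mathcal H_\Sigma$ and a self-adjoint operator $H_\Sigma$ with discrete spectrum bounded below and finite-dimensional eigenspaces $\mathcal H_\Sigma^\lambda$, such that cylinders $\Sigma\times I$ of complex volume $s$ act by $\exp(-sH_\Sigma)$; for disconnected $\Sigma$, $\mathcal H_\Sigma$ is the tensor product over components and $H_\Sigma$ the sum of the component Hamiltonians. The Hermitian nuclear pair assigned to $\Sigma$ is $\check E_\Sigma\subset\mathcal H_\Sigma\subset\hat E_\Sigma$ where, writing elements as families $(v_\lambda)\in\prod_{\lambda\in\mathrm{Spec}(H_\Sigma)}\mathcal H^\lambda_\Sigma$: $\check E_\Sigma=\{(v_\lambda):\exists\tau\in\mathbb C_{>0},\ (e^{\tau\lambda}v_\lambda)\in\mathcal H_\Sigma\}$ (colimit of copies of $\mathcal H_\Sigma$ under $e^{-\tau H_\Sigma}$) and $\hat E_\Sigma=\{(v_\lambda):\forall\tau\in\mathbb C_{>0},\ (e^{-\tau\lambda}v_\lambda)\in\mathcal H_\Sigma\}$ with the Fréchet topology given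 by the seminorms $(v_\lambda)\mapsto\|(e^{-\tau_i\lambda}v_\lambda)\|$ for a sequence $\tau_i$ with real parts decreasing to $0$. $\Lambda_{\Sigma_0,\Sigma_1}=\mathrm{Spec}(H_{\Sigma_0})\cap\mathrm{Spec}(H_{\Sigma_1})$; $\pi_{k,\lambda}:\mathcal H_{\Sigma_k}\to\mathcal H^\lambda_{\Sigma_k}$ is the orthogonal projection and $\iota_{k,\lambda}$ the inclusion. *)

theory Defs
  imports "HOL-Analysis.Analysis"
begin

text \<open>
Spectral model of the state space of a closed (n-1)-manifold Sigma.
The spectrum of H_Sigma is a set S of reals; the eigenspace for an eigenvalue l
has dimension d l (finite, at least 1) and is identified, via an orthonormal basis,
with the functions x :: nat => complex vanishing at indices >= d l.
An element of the product over the spectrum of the eigenspaces is a family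
v :: real => nat => complex with v l in the l-eigenspace (and v l = 0 for l not in S).
\<close>

type_synonym fam = "real \<Rightarrow> nat \<Rightarrow> complex"

definition eig :: "nat \<Rightarrow> (nat \<Rightarrow> complex) set" where
  "eig n = {x. \<forall>i\<ge>n. x i = 0}"

definition vnorm :: "nat \<Rightarrow> (nat \<Rightarrow> complex) \<Rightarrow> real" where
  "vnorm n x = sqrt (\<Sum>i<n. (cmod (x i))\<^sup>2)"

definition opnorm :: "nat \<Rightarrow> nat \<Rightarrow> ((nat \<Rightarrow> complex) \<Rightarrow> (nat \<Rightarrow> complex)) \<Rightarrow> real" where
  "opnorm n m g = Sup {vnorm m (g x) | x. x \<in> eig n \<and> vnorm n x \<le> 1}"

definition lin_on :: "(nat \<Rightarrow> complex) set \<Rightarrow> ((nat \<Rightarrow> complex) \<Rightarrow> (nat \<Rightarrow> complex)) \<Rightarrow> bool" where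
  "lin_on A g \<longleftrightarrow> (\<forall>x\<in>A. \<forall>y\<in>A. \<forall>a b::complex.
      g (\<lambda>i. a * x i + b * y i) = (\<lambda>i. a * g x i + b * g y i))"

definition prodE :: "real set \<Rightarrow> (real \<Rightarrow> nat) \<Rightarrow> fam set" where
  "prodE S d = {v. \<forall>l. v l \<in> eig (if l \<in> S then d l else 0)}"

definition in_hilb :: "real set \<Rightarrow> (real \<Rightarrow> nat) \<Rightarrow> fam \<Rightarrow> bool" where
  "in_hilb S d v \<longleftrightarrow> v \<in> prodE S d \<and> (\<lambda>(l,i). (cmod (v l i))\<^sup>2) summable_on UNIV"

definition hilb :: "real set \<Rightarrow> (real \<Rightarrow> nat) \<Rightarrow> fam set" where
  "hilb S d = {v. in_hilb S d v}"

definition hnorm :: "fam \<Rightarrow> real" where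
  "hnorm v = sqrt (infsum (\<lambda>(l,i). (cmod (v l i))\<^sup>2) UNIV)"

text \<open>scale tau v = (e^(tau l) v_l)_l, i.e. the action of e^(tau H).\<close>
definition scale :: "complex \<Rightarrow> fam \<Rightarrow> fam" where
  "scale \<tau> v = (\<lambda>l i. exp (\<tau> * complex_of_real l) * v l i)"

definition fdiff :: "fam \<Rightarrow> fam \<Rightarrow> fam" where
  "fdiff w v = (\<lambda>l i. w l i - v l i)"

definition fadd :: "fam \<Rightarrow> fam \<Rightarrow> fam" where
  "fadd w v = (\<lambda>l i. w l i + v l i)"

definition checkE :: "real set \<Rightarrow> (real \<Rightarrow> nat) \<Rightarrow> fam set" where
  "checkE S d = {v \<in> prodE S d. \<exists>\<tau>. 0 < Re \<tau> \<and> in_hilb S d (scale \<tau> v)}"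

definition hatE :: "real set \<Rightarrow> (real \<Rightarrow> nat) \<Rightarrow> fam set" where
  "hatE S d = {v \<in> prodE S d. \<forall>\<tau>. 0 < Re \<tau> \<longrightarrow> in_hilb S d (scale (- \<tau>) v)}"

definition tau_seq :: "nat \<Rightarrow> complex" where
  "tau_seq i = complex_of_real (1 / real (Suc i))"

definition hat_top :: "real set \<Rightarrow> (real \<Rightarrow> nat) \<Rightarrow> fam topology" where
  "hat_top S d = topology_generated_by
     {{w \<in> hatE S d. hnorm (scale (- tau_seq i) (fdiff w v)) < \<epsilon>} | v i \<epsilon>.
        v \<in> hatE S d \<and> 0 < \<epsilon>}"

definition absconv :: "fam set \<Rightarrow> bool" where
  "absconv W \<longleftrightarrow> (\<forall>x\<in>W. \<forall>y\<in>W. \<forall>a b::complex. cmod a + cmod b \<le> 1 \<longrightarrow>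
      (\<lambda>l i. a * x l i + b * y l i) \<in> W)"

text \<open>Locally convex colimit topology on Check E of the copies of H_Sigma under
  the maps e^(-tau H) (tau in C_{>0}): a set U is open iff around each of its points
  it contains a translate of an absolutely convex set whose preimage in every copy
  is a neighbourhood of 0.\<close>
definition check_top :: "real set \<Rightarrow> (real \<Rightarrow> nat) \<Rightarrow> fam topology" where
  "check_top S d = topology_generated_by
     {U. U \<subseteq> checkE S d \<and>
         (\<forall>v\<in>U. \<exists>W. absconv W \<and>
            (\<forall>\<tau>. 0 < Re \<tau> \<longrightarrow> (\<exists>\<epsilon>>0. \<forall>w. in_hilb S d w \<and> hnorm w < \<epsilon> \<longrightarrow> scale (- \<tau>) w \<in> W)) \<and>
            fadd v ` W \<subseteq> U)}"

definition lin_fam :: "fam set \<Rightarrow> (fam \<Rightarrow> fam) \<Rightarrow> bool" where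
  "lin_fam A g \<longleftrightarrow> (\<forall>x\<in>A. \<forall>y\<in>A. \<forall>a b::complex.
      g (\<lambda>l i. a * x l i + b * y l i) = (\<lambda>l i. a * g x l i + b * g y l i))"

text \<open>f^Hilb = sum over lambda in Lambda of iota_{1,lambda} o f_lambda o pi_{0,lambda}.\<close>
definition fHilb :: "real set \<Rightarrow> real set \<Rightarrow> (real \<Rightarrow> (nat \<Rightarrow> complex) \<Rightarrow> (nat \<Rightarrow> complex)) \<Rightarrow> fam \<Rightarrow> fam" where
  "fHilb S0 S1 f v = (\<lambda>l. if l \<in> S0 \<inter> S1 then f l (v l) else (\<lambda>i. 0))"

text \<open>Spectral data of a Hamiltonian: discrete spectrum bounded below (finitely many
  eigenvalues below any bound) with finite-dimensional nonzero eigenspaces.\<close>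
definition spectral_data :: "real set \<Rightarrow> (real \<Rightarrow> nat) \<Rightarrow> bool" where
  "spectral_data S d \<longleftrightarrow> (\<forall>B. finite {l\<in>S. l \<le> B}) \<and> (\<forall>l\<in>S. 1 \<le> d l)"

end

theory Submission
  imports Defs
begin

definition nsq :: "fam \<Rightarrow> real \<Rightarrow> real" where
  "nsq v l = infsum (\<lambda>i. (cmod (v l i))\<^sup>2) UNIV"

lemma eig_has_sum:
  assumes "x \<in> eig n"
  shows "((\<lambda>i. (cmod (x i))\<^sup>2) has_sum (\<Sum>i<n. (cmod (x i))\<^sup>2)) UNIV"
proof -
  have "((\<lambda>i. (cmod (x i))\<^sup>2) has_sum (\<Sum>i<n. (cmod (x i))\<^sup>2)) {..<n}"
    by (rule has_sum_finite) simp
  then show ?thesis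
    by (rule has_sum_cong_neutral[THEN iffD1, rotated -1]) (use assms in \<open>auto simp: eig_def\<close>)
qed

lemma nsq_eig: "v l \<in> eig n \<Longrightarrow> nsq v l = (\<Sum>i<n. (cmod (v l i))\<^sup>2)"
  unfolding nsq_def using eig_has_sum infsumI by blast

lemma nsq_nonneg: "0 \<le> nsq v l"
  unfolding nsq_def by (rule infsum_nonneg) simp

lemma blk:
  assumes "\<And>l. v l \<in> eig (n l)"
  shows "((\<lambda>(l,i). (cmod (v l i))\<^sup>2) summable_on UNIV) = (nsq v summable_on UNIV)"
    and "infsum (\<lambda>(l,i). (cmod (v l i))\<^sup>2) UNIV = infsum (nsq v) UNIV"
proof -
  let ?g = "\<lambda>(l,i). (cmod (v l i))\<^sup>2"
  have hs: "((\<lambda>i. ?g (l,i)) has_sum nsq v l) UNIV" for l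
    using eig_has_sum[OF assms[of l]] nsq_eig[of v l "n l", OF assms[of l]] by simp
  have U: "(UNIV :: (real \<times> nat) set) = Sigma UNIV (\<lambda>_. UNIV)" by simp
  have 1: "(nsq v has_sum infsum ?g UNIV) UNIV" if "?g summable_on UNIV"
  proof -
    have "(?g has_sum infsum ?g UNIV) (Sigma UNIV (\<lambda>_. UNIV))"
      using that U by (metis has_sum_infsum)
    then show ?thesis by (rule has_sum_SigmaD) (use hs in auto)
  qed
  have 2: "?g summable_on UNIV" if "nsq v summable_on UNIV"
  proof -
    have "?g summable_on Sigma UNIV (\<lambda>_. UNIV)"
      by (rule summable_on_SigmaI[where g = "nsq v"]) (use hs that in auto)
    then show ?thesis using U by metis
  qed
  show "(?g summable_on UNIV) = (nsq v summable_on UNIV)"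
    using 1 2 summable_on_def by blast
  show "infsum ?g UNIV = infsum (nsq v) UNIV"
  proof (cases "?g summable_on UNIV")
    case True
    then show ?thesis using 1 infsumI by (metis (no_types))
  next
    case False
    then have "\<not> nsq v summable_on UNIV" using 2 by blast
    then show ?thesis using False by (simp add: infsum_not_exists)
  qed
qed


lemma prodE_eig: "v \<in> prodE S d \<Longrightarrow> v l \<in> eig (if l \<in> S then d l else 0)"
  unfolding prodE_def by auto

lemma hilb_iff: "v \<in> prodE S d \<Longrightarrow> in_hilb S d v \<longleftrightarrow> nsq v summable_on UNIV"
proof -
  assume "v \<in> prodE S d"
  then have "\<And>l. v l \<in> eig (if l \<in> S then d l else 0)" by (rule prodE_eig)
  from blk(1)[of v, OF this] \<open>v \<in> prodE S d\<close> show ?thesis unfolding in_hilb_def by blast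
qed

lemma hnorm_eq: "v \<in> prodE S d \<Longrightarrow> hnorm v = sqrt (infsum (nsq v) UNIV)"
proof -
  assume "v \<in> prodE S d"
  then have "\<And>l. v l \<in> eig (if l \<in> S then d l else 0)" by (rule prodE_eig)
  from blk(2)[of v, OF this] show ?thesis unfolding hnorm_def by simp
qed

lemma hilb_prodE: "in_hilb S d v \<Longrightarrow> v \<in> prodE S d"
  unfolding in_hilb_def by auto

lemma dom:
  assumes "v \<in> prodE S d" "u \<in> prodE S' d'" "in_hilb S d v" "0 \<le> c"
    "\<And>l. nsq u l \<le> c * nsq v l"
  shows "in_hilb S' d' u" "hnorm u \<le> sqrt c * hnorm v"
proof -
  have sv: "nsq v summable_on UNIV" using assms hilb_iff by blast
  have sc: "(\<lambda>l. c * nsq v l) summable_on UNIV" using sv summable_on_cmult_right by blast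
  have su: "nsq u summable_on UNIV"
    by (rule summable_on_comparison_test[OF sc]) (use assms nsq_nonneg in auto)
  then show "in_hilb S' d' u" using hilb_iff assms by blast
  have "infsum (nsq u) UNIV \<le> infsum (\<lambda>l. c * nsq v l) UNIV"
    by (rule infsum_mono[OF su sc]) (use assms in auto)
  also have "\<dots> = c * infsum (nsq v) UNIV" by (rule infsum_cmult_right')
  finally have "sqrt (infsum (nsq u) UNIV) \<le> sqrt (c * infsum (nsq v) UNIV)" by simp
  then show "hnorm u \<le> sqrt c * hnorm v"
    using assms hnorm_eq by (simp add: real_sqrt_mult)
qed

lemma nsq_scale: "nsq (scale \<tau> v) l = exp (2 * Re \<tau> * l) * nsq v l"
proof -
  have "(cmod (scale \<tau> v l i))\<^sup>2 = exp (2 * Re \<tau> * l) * (cmod (v l i))\<^sup>2" for i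
  proof -
    have "cmod (scale \<tau> v l i) = exp (Re \<tau> * l) * cmod (v l i)"
      by (simp add: scale_def norm_mult norm_exp_eq_Re)
    moreover have "(exp (Re \<tau> * l))\<^sup>2 = exp (2 * Re \<tau> * l)"
      by (simp add: power2_eq_square exp_add[symmetric])
    ultimately show ?thesis by (simp add: power_mult_distrib)
  qed
  then show ?thesis unfolding nsq_def by (simp add: infsum_cmult_right')
qed
lemma eig_lc: "x \<in> eig n \<Longrightarrow> y \<in> eig n \<Longrightarrow> (\<lambda>i. a * x i + b * y i) \<in> eig n"
  unfolding eig_def by auto

lemma prodE_lc: "x \<in> prodE S d \<Longrightarrow> y \<in> prodE S d \<Longrightarrow> (\<lambda>l i. a * x l i + b * y l i) \<in> prodE S d"
  unfolding prodE_def eig_def by auto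

lemma scale_prodE: "v \<in> prodE S d \<Longrightarrow> scale \<tau> v \<in> prodE S d"
  unfolding prodE_def eig_def scale_def by auto

lemma scale_scale: "scale a (scale b v) = scale (a + b) v"
  unfolding scale_def by (simp add: fun_eq_iff exp_add distrib_right mult.assoc)

lemma scale_lc: "scale \<tau> (\<lambda>l i. a * x l i + b * y l i) = (\<lambda>l i. a * scale \<tau> x l i + b * scale \<tau> y l i)"
  unfolding scale_def by (simp add: fun_eq_iff algebra_simps)

lemma sq2: "(p + q)\<^sup>2 \<le> 2 * p\<^sup>2 + 2 * (q::real)\<^sup>2"
  using zero_le_power2[of "p - q"] by (simp add: power2_eq_square algebra_simps)

lemma sq_lc_le: "(cmod (a * x + b * y))\<^sup>2 \<le> 2 * (cmod a)\<^sup>2 * (cmod x)\<^sup>2 + 2 * (cmod b)\<^sup>2 * (cmod y)\<^sup>2"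
proof -
  have "cmod (a * x + b * y) \<le> cmod a * cmod x + cmod b * cmod y"
    using norm_triangle_ineq[of "a*x" "b*y"] by (simp add: norm_mult)
  then have "(cmod (a * x + b * y))\<^sup>2 \<le> (cmod a * cmod x + cmod b * cmod y)\<^sup>2"
    by (simp add: power_mono)
  also have "\<dots> \<le> 2 * (cmod a * cmod x)\<^sup>2 + 2 * (cmod b * cmod y)\<^sup>2"
    using sq2 by blast
  also have "\<dots> = 2 * (cmod a)\<^sup>2 * (cmod x)\<^sup>2 + 2 * (cmod b)\<^sup>2 * (cmod y)\<^sup>2"
    by (simp add: power_mult_distrib)
  finally show ?thesis .
qed

lemma sum_gen:
  fixes X Y :: "'a \<Rightarrow> complex"
  assumes "(\<lambda>k. (cmod (X k))\<^sup>2) summable_on A" "(\<lambda>k. (cmod (Y k))\<^sup>2) summable_on A"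
  shows "(\<lambda>k. (cmod (a * X k + b * Y k))\<^sup>2) summable_on A"
proof -
  have "(\<lambda>k. 2 * (cmod a)\<^sup>2 * (cmod (X k))\<^sup>2 + 2 * (cmod b)\<^sup>2 * (cmod (Y k))\<^sup>2) summable_on A"
    by (intro summable_on_add summable_on_cmult_right assms)
  then show ?thesis
    by (rule summable_on_comparison_test) (auto intro: sq_lc_le)
qed

lemma tri_gen:
  fixes X Y :: "'a \<Rightarrow> complex"
  assumes sx: "(\<lambda>k. (cmod (X k))\<^sup>2) summable_on A" and sy: "(\<lambda>k. (cmod (Y k))\<^sup>2) summable_on A"
  shows "sqrt (infsum (\<lambda>k. (cmod (X k + Y k))\<^sup>2) A)
     \<le> sqrt (infsum (\<lambda>k. (cmod (X k))\<^sup>2) A) + sqrt (infsum (\<lambda>k. (cmod (Y k))\<^sup>2) A)"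
proof -
  let ?hx = "sqrt (infsum (\<lambda>k. (cmod (X k))\<^sup>2) A)"
  let ?hy = "sqrt (infsum (\<lambda>k. (cmod (Y k))\<^sup>2) A)"
  have s: "(\<lambda>k. (cmod (1 * X k + 1 * Y k))\<^sup>2) summable_on A"
    by (rule sum_gen[OF sx sy])
  have "infsum (\<lambda>k. (cmod (X k + Y k))\<^sup>2) A \<le> (?hx + ?hy)\<^sup>2"
  proof (rule infsum_le_finite_sums)
    show "(\<lambda>k. (cmod (X k + Y k))\<^sup>2) summable_on A" using s by simp
  next
    fix F assume F: "finite F" "F \<subseteq> A"
    have lx: "L2_set (\<lambda>k. cmod (X k)) F \<le> ?hx"
      unfolding L2_set_def
      by (intro real_sqrt_le_mono finite_sum_le_infsum[OF sx F]) auto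
    have ly: "L2_set (\<lambda>k. cmod (Y k)) F \<le> ?hy"
      unfolding L2_set_def
      by (intro real_sqrt_le_mono finite_sum_le_infsum[OF sy F]) auto
    have "L2_set (\<lambda>k. cmod (X k + Y k)) F \<le> L2_set (\<lambda>k. cmod (X k) + cmod (Y k)) F"
      by (rule L2_set_mono) (auto intro: norm_triangle_ineq)
    also have "\<dots> \<le> L2_set (\<lambda>k. cmod (X k)) F + L2_set (\<lambda>k. cmod (Y k)) F"
      by (rule L2_set_triangle_ineq)
    also have "\<dots> \<le> ?hx + ?hy" using lx ly by simp
    finally have "(L2_set (\<lambda>k. cmod (X k + Y k)) F)\<^sup>2 \<le> (?hx + ?hy)\<^sup>2"
      by (simp add: power_mono)
    then show "sum (\<lambda>k. (cmod (X k + Y k))\<^sup>2) F \<le> (?hx + ?hy)\<^sup>2"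
      unfolding L2_set_def by (simp add: sum_nonneg)
  qed
  then have "sqrt (infsum (\<lambda>k. (cmod (X k + Y k))\<^sup>2) A) \<le> sqrt ((?hx + ?hy)\<^sup>2)"
    by (rule real_sqrt_le_mono)
  moreover have "0 \<le> ?hx + ?hy" by (simp add: infsum_nonneg)
  ultimately show ?thesis by simp
qed


lemma hilb_pairs: "in_hilb S d x \<Longrightarrow> (\<lambda>k. (cmod (case_prod x k))\<^sup>2) summable_on UNIV"
  unfolding in_hilb_def by (simp add: case_prod_unfold)

lemma hilb_lc:
  assumes "in_hilb S d x" "in_hilb S d y"
  shows "in_hilb S d (\<lambda>l i. a * x l i + b * y l i)"
proof -
  have "(\<lambda>k. (cmod (a * case_prod x k + b * case_prod y k))\<^sup>2) summable_on UNIV"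
    by (rule sum_gen[OF hilb_pairs[OF assms(1)] hilb_pairs[OF assms(2)]])
  moreover have "(\<lambda>l i. a * x l i + b * y l i) \<in> prodE S d"
    using assms hilb_prodE prodE_lc by blast
  ultimately show ?thesis unfolding in_hilb_def by (simp add: case_prod_unfold)
qed

lemma hnorm_tri:
  assumes "in_hilb S d x" "in_hilb S d y"
  shows "hnorm (fadd x y) \<le> hnorm x + hnorm y"
proof -
  have "sqrt (infsum (\<lambda>k. (cmod (case_prod x k + case_prod y k))\<^sup>2) UNIV)
     \<le> sqrt (infsum (\<lambda>k. (cmod (case_prod x k))\<^sup>2) UNIV) + sqrt (infsum (\<lambda>k. (cmod (case_prod y k))\<^sup>2) UNIV)"
    by (rule tri_gen[OF hilb_pairs[OF assms(1)] hilb_pairs[OF assms(2)]])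
  then show ?thesis unfolding hnorm_def fadd_def by (simp add: case_prod_unfold)
qed

lemma hnorm_zero: "hnorm (\<lambda>l i. 0) = 0"
  unfolding hnorm_def by (simp add: case_prod_unfold)

lemma lower_bound: "spectral_data S d \<Longrightarrow> \<exists>m. \<forall>l\<in>S. m \<le> l"
proof -
  assume "spectral_data S d"
  then have fin: "finite {l\<in>S. l \<le> 0}" unfolding spectral_data_def by blast
  show ?thesis
  proof (intro exI ballI)
    fix l assume "l \<in> S"
    show "- (\<Sum>x\<in>{l\<in>S. l \<le> 0}. \<bar>x\<bar>) \<le> l"
    proof (cases "l \<le> 0")
      case True
      then have "\<bar>l\<bar> \<le> (\<Sum>x\<in>{l\<in>S. l \<le> 0}. \<bar>x\<bar>)"
        using \<open>l \<in> S\<close> by (intro member_le_sum fin) auto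
      then show ?thesis by simp
    next
      case False
      have "0 \<le> (\<Sum>x\<in>{l\<in>S. l \<le> 0}. \<bar>x\<bar>)" by (rule sum_nonneg) simp
      then show ?thesis using False by simp
    qed
  qed
qed

lemma nsq_out: "v \<in> prodE S d \<Longrightarrow> l \<notin> S \<Longrightarrow> nsq v l = 0"
  using nsq_eig[of v l 0] prodE_eig[of v S d l] by simp

lemma shrink:
  assumes sd: "spectral_data S d" and w: "in_hilb S d w" and r: "Re \<sigma> \<le> 0"
  shows "in_hilb S d (scale \<sigma> w)"
proof -
  obtain m where m: "\<And>l. l \<in> S \<Longrightarrow> m \<le> l" using lower_bound[OF sd] by blast
  have wp: "w \<in> prodE S d" using w hilb_prodE by blast
  show ?thesis
  proof (rule dom(1)[OF wp scale_prodE[OF wp] w])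
    show "0 \<le> exp (2 * Re \<sigma> * m)" by simp
    fix l
    show "nsq (scale \<sigma> w) l \<le> exp (2 * Re \<sigma> * m) * nsq w l"
    proof (cases "l \<in> S")
      case True
      have "2 * Re \<sigma> * l \<le> 2 * Re \<sigma> * m"
        using m[OF True] r by (simp add: mult_left_mono_neg)
      then show ?thesis unfolding nsq_scale by (intro mult_right_mono nsq_nonneg) simp
    next
      case False
      then show ?thesis using nsq_out[OF wp False] by (simp add: nsq_scale)
    qed
  qed
qed

lemma scale_zero: "scale 0 v = v"
  unfolding scale_def by simp

lemma checkE_lc:
  assumes sd: "spectral_data S d" and x: "x \<in> checkE S d" and y: "y \<in> checkE S d"
  shows "(\<lambda>l i. a * x l i + b * y l i) \<in> checkE S d"
proof -
  obtain t1 where t1: "0 < Re t1" "in_hilb S d (scale t1 x)" using x unfolding checkE_def by blast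
  obtain t2 where t2: "0 < Re t2" "in_hilb S d (scale t2 y)" using y unfolding checkE_def by blast
  define r where "r = complex_of_real (min (Re t1) (Re t2))"
  have r: "0 < Re r" "Re r \<le> Re t1" "Re r \<le> Re t2" using t1 t2 unfolding r_def by auto
  have "in_hilb S d (scale (r - t1) (scale t1 x))" by (rule shrink[OF sd t1(2)]) (use r in simp)
  then have hx: "in_hilb S d (scale r x)" by (simp add: scale_scale)
  have "in_hilb S d (scale (r - t2) (scale t2 y))" by (rule shrink[OF sd t2(2)]) (use r in simp)
  then have hy: "in_hilb S d (scale r y)" by (simp add: scale_scale)
  have "in_hilb S d (scale r (\<lambda>l i. a * x l i + b * y l i))"
    unfolding scale_lc by (rule hilb_lc[OF hx hy])
  moreover have "(\<lambda>l i. a * x l i + b * y l i) \<in> prodE S d"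
    using x y unfolding checkE_def by (blast intro: prodE_lc)
  ultimately show ?thesis unfolding checkE_def using r(1) by (simp only: mem_Collect_eq) blast
qed

lemma hatE_lc:
  assumes x: "x \<in> hatE S d" and y: "y \<in> hatE S d"
  shows "(\<lambda>l i. a * x l i + b * y l i) \<in> hatE S d"
proof -
  have p: "(\<lambda>l i. a * x l i + b * y l i) \<in> prodE S d"
    using x y unfolding hatE_def by (blast intro: prodE_lc)
  have "in_hilb S d (scale (- \<tau>) (\<lambda>l i. a * x l i + b * y l i))" if "0 < Re \<tau>" for \<tau>
  proof -
    have "in_hilb S d (scale (- \<tau>) x)" "in_hilb S d (scale (- \<tau>) y)"
      using x y that unfolding hatE_def by blast+
    then show ?thesis unfolding scale_lc by (rule hilb_lc)
  qed
  then show ?thesis using p unfolding hatE_def by blast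
qed

lemma hilb_checkE:
  assumes "in_hilb S d w" "0 < Re \<tau>"
  shows "scale (- \<tau>) w \<in> checkE S d"
proof -
  have "scale \<tau> (scale (- \<tau>) w) = w" by (simp add: scale_scale scale_zero)
  then have "in_hilb S d (scale \<tau> (scale (- \<tau>) w))" using assms(1) by simp
  moreover have "scale (- \<tau>) w \<in> prodE S d" using assms(1) by (intro scale_prodE hilb_prodE)
  ultimately show ?thesis unfolding checkE_def using assms(2) by blast
qed

lemma vnorm_L2: "vnorm n x = L2_set (\<lambda>i. cmod (x i)) {..<n}"
  unfolding vnorm_def L2_set_def by simp

lemma vnorm_sq: "(vnorm n x)\<^sup>2 = (\<Sum>i<n. (cmod (x i))\<^sup>2)"
  unfolding vnorm_def by (simp add: sum_nonneg)

lemma vnorm_nonneg: "0 \<le> vnorm n x"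
  unfolding vnorm_def by (simp add: sum_nonneg)

lemma vnorm_smult: "vnorm n (\<lambda>i. c * x i) = cmod c * vnorm n x"
  unfolding vnorm_L2 by (simp add: L2_set_right_distrib norm_mult)

lemma vnorm_zero: "vnorm n (\<lambda>i. 0) = 0"
  unfolding vnorm_def by simp

lemma comp_le_vnorm: "k < n \<Longrightarrow> cmod (x k) \<le> vnorm n x"
proof -
  assume k: "k < n"
  have "(cmod (x k))\<^sup>2 \<le> (\<Sum>i<n. (cmod (x i))\<^sup>2)"
    using k by (intro member_le_sum) auto
  then have "sqrt ((cmod (x k))\<^sup>2) \<le> vnorm n x" unfolding vnorm_def by (rule real_sqrt_le_mono)
  then show ?thesis by simp
qed

lemma lin_zero: "lin_on (eig n) g \<Longrightarrow> g (\<lambda>i. 0) = (\<lambda>i. 0)"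
proof -
  assume "lin_on (eig n) g"
  then have H: "\<And>x y a b. x \<in> eig n \<Longrightarrow> y \<in> eig n \<Longrightarrow> g (\<lambda>i. a * x i + b * y i) = (\<lambda>i. a * g x i + b * g y i)"
    unfolding lin_on_def by blast
  have z: "(\<lambda>i. 0) \<in> eig n" unfolding eig_def by simp
  from H[OF z z, of 0 0] show ?thesis by simp
qed

lemma lin_smult: "lin_on (eig n) g \<Longrightarrow> x \<in> eig n \<Longrightarrow> g (\<lambda>i. c * x i) = (\<lambda>i. c * g x i)"
proof -
  assume "lin_on (eig n) g" "x \<in> eig n"
  then have "g (\<lambda>i. c * x i + 0 * x i) = (\<lambda>i. c * g x i + 0 * g x i)"
    unfolding lin_on_def by blast
  then show ?thesis by simp
qed

definition ev :: "nat \<Rightarrow> nat \<Rightarrow> complex" where "ev k = (\<lambda>i. if i = k then 1 else 0)"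

lemma lin_expand:
  assumes lin: "lin_on (eig n) g" and x: "x \<in> eig n"
  shows "g x = (\<lambda>i. \<Sum>k<n. x k * g (ev k) i)"
proof -
  define p where "p j = (\<lambda>i. if i < j then x i else 0)" for j
  have pe: "p j \<in> eig n" for j using x unfolding p_def eig_def by auto
  have ee: "k < n \<Longrightarrow> ev k \<in> eig n" for k unfolding ev_def eig_def by auto
  have H: "\<And>x y a b. x \<in> eig n \<Longrightarrow> y \<in> eig n \<Longrightarrow> g (\<lambda>i. a * x i + b * y i) = (\<lambda>i. a * g x i + b * g y i)"
    using lin unfolding lin_on_def by blast
  have gp: "j \<le> n \<Longrightarrow> g (p j) = (\<lambda>i. \<Sum>k<j. x k * g (ev k) i)" for j
  proof (induction j)
    case 0
    have "p 0 = (\<lambda>i. 0)" unfolding p_def by simp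
    then show ?case using lin_zero[OF lin] by simp
  next
    case (Suc j)
    have "p (Suc j) = (\<lambda>i. 1 * p j i + x j * ev j i)"
      unfolding p_def ev_def by (auto simp: fun_eq_iff less_Suc_eq)
    moreover have "g (\<lambda>i. 1 * p j i + x j * ev j i) = (\<lambda>i. 1 * g (p j) i + x j * g (ev j) i)"
      using H[OF pe[of j] ee[of j], of 1 "x j"] Suc.prems by simp
    ultimately have "g (p (Suc j)) = (\<lambda>i. 1 * g (p j) i + x j * g (ev j) i)" by simp
    then show ?case using Suc by simp
  qed
  moreover have "p n = x" using x unfolding p_def eig_def by (auto simp: fun_eq_iff)
  ultimately show ?thesis using gp[of n] by simp
qed


lemma opset_bdd:
  assumes lin: "lin_on (eig n) g"
  shows "bdd_above {vnorm m (g x) | x. x \<in> eig n \<and> vnorm n x \<le> 1}"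
proof -
  let ?K = "\<Sum>i<m. \<Sum>k<n. cmod (g (ev k) i)"
  have "vnorm m (g x) \<le> ?K" if x: "x \<in> eig n" "vnorm n x \<le> 1" for x
  proof -
    have "vnorm m (g x) \<le> (\<Sum>i<m. cmod (g x i))"
      unfolding vnorm_L2 by (rule L2_set_le_sum) simp
    also have "\<dots> \<le> ?K"
    proof (rule sum_mono)
      fix i
      have "cmod (g x i) = cmod (\<Sum>k<n. x k * g (ev k) i)" using lin_expand[OF lin x(1)] by simp
      also have "\<dots> \<le> (\<Sum>k<n. cmod (x k * g (ev k) i))" by (rule norm_sum)
      also have "\<dots> \<le> (\<Sum>k<n. cmod (g (ev k) i))"
      proof (rule sum_mono)
        fix k assume "k \<in> {..<n}"
        then have "cmod (x k) \<le> 1" using comp_le_vnorm[of k n x] x by simp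
        then show "cmod (x k * g (ev k) i) \<le> cmod (g (ev k) i)"
          by (simp add: norm_mult mult_left_le_one_le)
      qed
      finally show "cmod (g x i) \<le> (\<Sum>k<n. cmod (g (ev k) i))" .
    qed
    finally show ?thesis .
  qed
  then show ?thesis unfolding bdd_above_def by blast
qed

lemma opset_ne: "{vnorm m (g x) | x. x \<in> eig n \<and> vnorm n x \<le> 1} \<noteq> {}"
proof -
  have z: "(\<lambda>i. 0) \<in> eig n" unfolding eig_def by simp
  have "vnorm n (\<lambda>i. 0) \<le> 1" by (simp add: vnorm_zero)
  then have "vnorm m (g (\<lambda>i. 0)) \<in> {vnorm m (g x) | x. x \<in> eig n \<and> vnorm n x \<le> 1}"
    using z by blast
  then show ?thesis by blast
qed

lemma opnorm_upper:
  assumes lin: "lin_on (eig n) g" and x: "x \<in> eig n" "vnorm n x \<le> 1"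
  shows "vnorm m (g x) \<le> opnorm n m g"
proof -
  have "vnorm m (g x) \<in> {vnorm m (g x) | x. x \<in> eig n \<and> vnorm n x \<le> 1}"
    using x by blast
  then show ?thesis unfolding opnorm_def by (rule cSup_upper[OF _ opset_bdd[OF lin]])
qed

lemma opnorm_nonneg:
  assumes lin: "lin_on (eig n) g"
  shows "0 \<le> opnorm n m g"
proof -
  have z: "(\<lambda>i. 0) \<in> eig n" unfolding eig_def by simp
  have "vnorm m (g (\<lambda>i. 0)) \<le> opnorm n m g"
    by (rule opnorm_upper[OF lin z]) (simp add: vnorm_zero)
  then show ?thesis using lin_zero[OF lin] vnorm_zero by simp
qed

lemma opnorm_bound:
  assumes lin: "lin_on (eig n) g" and x: "x \<in> eig n"
  shows "vnorm m (g x) \<le> opnorm n m g * vnorm n x"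
proof (cases "vnorm n x = 0")
  case True
  have "x = (\<lambda>i. 0)"
  proof (rule ext)
    fix i
    show "x i = 0"
    proof (cases "i < n")
      case True
      then have "cmod (x i) \<le> 0" using comp_le_vnorm[of i n x] \<open>vnorm n x = 0\<close> by simp
      then show ?thesis by simp
    next
      case False
      then show ?thesis using x unfolding eig_def by simp
    qed
  qed
  then show ?thesis using lin_zero[OF lin] vnorm_zero by simp
next
  case False
  then have c: "0 < vnorm n x" using vnorm_nonneg[of n x] by simp
  define y where "y = (\<lambda>i. complex_of_real (1 / vnorm n x) * x i)"
  have ye: "y \<in> eig n" using x unfolding y_def eig_def by simp
  have yn: "vnorm n y = 1" unfolding y_def vnorm_smult using c by (simp add: norm_divide)
  have "vnorm m (g y) \<le> opnorm n m g"
    by (rule opnorm_upper[OF lin ye]) (simp add: yn)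
  moreover have "g y = (\<lambda>i. complex_of_real (1 / vnorm n x) * g x i)"
    unfolding y_def by (rule lin_smult[OF lin x])
  moreover have "vnorm m (\<lambda>i. complex_of_real (1 / vnorm n x) * g x i) = (1 / vnorm n x) * vnorm m (g x)"
    unfolding vnorm_smult using c by (simp add: norm_divide)
  ultimately have "(1 / vnorm n x) * vnorm m (g x) \<le> opnorm n m g"
    by (simp only:)
  then show ?thesis using c by (simp add: field_simps)
qed

lemma opnorm_approx:
  assumes lin: "lin_on (eig n) g" and M: "M < opnorm n m g"
  shows "\<exists>x\<in>eig n. vnorm n x \<le> 1 \<and> M < vnorm m (g x)"
proof -
  have "\<exists>z\<in>{vnorm m (g x) | x. x \<in> eig n \<and> vnorm n x \<le> 1}. M < z"
    using M unfolding opnorm_def by (simp only: less_cSup_iff[OF opset_ne opset_bdd[OF lin]])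
  then show ?thesis by blast
qed


lemma scale_fadd: "scale \<sigma> (fadd a b) = fadd (scale \<sigma> a) (scale \<sigma> b)"
  unfolding scale_def fadd_def by (simp add: fun_eq_iff algebra_simps)

lemma fadd_lc: "fadd a b = (\<lambda>l i. 1 * a l i + 1 * b l i)"
  unfolding fadd_def by simp

lemma fdiff_lc: "fdiff a b = (\<lambda>l i. 1 * a l i + (-1) * b l i)"
  unfolding fdiff_def by simp

lemma fdiff_same: "fdiff v v = (\<lambda>l i. 0)"
  unfolding fdiff_def by simp

lemma scale_0fam: "scale \<sigma> (\<lambda>l i. 0) = (\<lambda>l i. 0)"
  unfolding scale_def by simp

lemma checkE_prodE: "v \<in> checkE S d \<Longrightarrow> v \<in> prodE S d"
  unfolding checkE_def by blast

lemma hatE_prodE: "v \<in> hatE S d \<Longrightarrow> v \<in> prodE S d"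
  unfolding hatE_def by blast

lemma top_check:
  assumes sd: "spectral_data S d"
  shows "topspace (check_top S d) = checkE S d"
proof -
  let ?G = "{U. U \<subseteq> checkE S d \<and>
         (\<forall>v\<in>U. \<exists>W. absconv W \<and>
            (\<forall>\<tau>. 0 < Re \<tau> \<longrightarrow> (\<exists>\<epsilon>>0. \<forall>w. in_hilb S d w \<and> hnorm w < \<epsilon> \<longrightarrow> scale (- \<tau>) w \<in> W)) \<and>
            fadd v ` W \<subseteq> U)}"
  have "checkE S d \<in> ?G"
  proof -
    have ac: "absconv (checkE S d)" unfolding absconv_def using checkE_lc[OF sd] by blast
    have nb: "\<forall>\<tau>. 0 < Re \<tau> \<longrightarrow> (\<exists>\<epsilon>>0. \<forall>w. in_hilb S d w \<and> hnorm w < \<epsilon> \<longrightarrow> scale (- \<tau>) w \<in> checkE S d)"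
      using hilb_checkE by (metis zero_less_one)
    have "fadd v ` checkE S d \<subseteq> checkE S d" if "v \<in> checkE S d" for v
      using checkE_lc[OF sd that] unfolding fadd_lc by blast
    then show ?thesis using ac nb by blast
  qed
  then have "checkE S d \<subseteq> \<Union>?G" by blast
  moreover have "\<Union>?G \<subseteq> checkE S d" by blast
  ultimately show ?thesis unfolding check_top_def topology_generated_by_topspace by blast
qed

lemma top_hat: "topspace (hat_top S d) = hatE S d"
proof -
  let ?G = "{{w \<in> hatE S d. hnorm (scale (- tau_seq i) (fdiff w v)) < \<epsilon>} | v i \<epsilon>.
        v \<in> hatE S d \<and> 0 < \<epsilon>}"
  have "v \<in> \<Union>?G" if "v \<in> hatE S d" for v
  proof -
    have "v \<in> {w \<in> hatE S d. hnorm (scale (- tau_seq 0) (fdiff w v)) < 1}"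
      using that by (simp add: fdiff_same scale_0fam hnorm_zero)
    moreover have "{w \<in> hatE S d. hnorm (scale (- tau_seq 0) (fdiff w v)) < 1} \<in> ?G"
      apply (rule CollectI)
      apply (rule exI[of _ v], rule exI[of _ 0], rule exI[of _ 1])
      using that by simp
    ultimately show ?thesis by blast
  qed
  moreover have "\<Union>?G \<subseteq> hatE S d" by blast
  ultimately show ?thesis unfolding hat_top_def topology_generated_by_topspace by blast
qed

locale fsetup =
  fixes S0 S1 :: "real set" and d0 d1 :: "real \<Rightarrow> nat"
    and f :: "real \<Rightarrow> (nat \<Rightarrow> complex) \<Rightarrow> (nat \<Rightarrow> complex)"
  assumes sd0: "spectral_data S0 d0" and sd1: "spectral_data S1 d1"
    and lin: "\<And>l. l \<in> S0 \<inter> S1 \<Longrightarrow> lin_on (eig (d0 l)) (f l)"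
    and maps: "\<And>l. l \<in> S0 \<inter> S1 \<Longrightarrow> f l ` eig (d0 l) \<subseteq> eig (d1 l)"
begin

abbreviation "T \<equiv> fHilb S0 S1 f"

lemma T_in: "l \<in> S0 \<inter> S1 \<Longrightarrow> T v l = f l (v l)"
  unfolding fHilb_def by auto

lemma T_out: "l \<notin> S0 \<inter> S1 \<Longrightarrow> T v l = (\<lambda>i. 0)"
  unfolding fHilb_def by auto

lemma T_prodE:
  assumes v: "v \<in> prodE S0 d0"
  shows "T v \<in> prodE S1 d1"
proof -
  have "T v l \<in> eig (if l \<in> S1 then d1 l else 0)" for l
  proof (cases "l \<in> S0 \<inter> S1")
    case True
    then have "v l \<in> eig (d0 l)" using prodE_eig[OF v, of l] by simp
    then have "f l (v l) \<in> eig (d1 l)" using maps[OF True] by blast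
    then show ?thesis using T_in[OF True] True by simp
  next
    case False
    then show ?thesis using T_out[OF False] by (simp add: eig_def)
  qed
  then show ?thesis unfolding prodE_def by blast
qed

lemma T_lc:
  assumes x: "x \<in> prodE S0 d0" and y: "y \<in> prodE S0 d0"
  shows "T (\<lambda>l i. a * x l i + b * y l i) = (\<lambda>l i. a * T x l i + b * T y l i)"
proof (rule ext)
  fix l
  show "T (\<lambda>l i. a * x l i + b * y l i) l = (\<lambda>i. a * T x l i + b * T y l i)"
  proof (cases "l \<in> S0 \<inter> S1")
    case True
    have "x l \<in> eig (d0 l)" "y l \<in> eig (d0 l)" using prodE_eig[OF x, of l] prodE_eig[OF y, of l] True by simp_all
    then have "f l (\<lambda>i. a * x l i + b * y l i) = (\<lambda>i. a * f l (x l) i + b * f l (y l) i)"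
      using lin[OF True] unfolding lin_on_def by blast
    then show ?thesis using True by (simp add: T_in)
  next
    case False
    then show ?thesis by (simp add: T_out)
  qed
qed

lemma T_nsq_in:
  assumes v: "v \<in> prodE S0 d0" and l: "l \<in> S0 \<inter> S1"
  shows "nsq (T v) l \<le> (opnorm (d0 l) (d1 l) (f l))\<^sup>2 * nsq v l"
proof -
  have vl: "v l \<in> eig (d0 l)" using prodE_eig[OF v, of l] l by simp
  then have fl: "f l (v l) \<in> eig (d1 l)" using maps[OF l] by blast
  have "nsq (T v) l = (vnorm (d1 l) (f l (v l)))\<^sup>2"
    using nsq_eig[of "T v" l "d1 l"] fl l by (simp add: T_in vnorm_sq)
  also have "\<dots> \<le> (opnorm (d0 l) (d1 l) (f l) * vnorm (d0 l) (v l))\<^sup>2"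
    by (intro power_mono opnorm_bound[OF lin[OF l] vl] vnorm_nonneg)
  also have "\<dots> = (opnorm (d0 l) (d1 l) (f l))\<^sup>2 * nsq v l"
    using nsq_eig[of v l "d0 l", OF vl] by (simp add: power_mult_distrib vnorm_sq)
  finally show ?thesis .
qed

lemma T_nsq_out: "l \<notin> S0 \<inter> S1 \<Longrightarrow> nsq (T v) l = 0"
  unfolding nsq_def by (simp add: T_out)

lemma TS:
  assumes B: "\<forall>t>0. \<exists>C>0. \<forall>l\<in>S0 \<inter> S1. opnorm (d0 l) (d1 l) (f l) < C * exp (t * l)"
    and st: "Re \<sigma> < Re \<rho>"
  shows "\<exists>C>0. \<forall>v. v \<in> prodE S0 d0 \<longrightarrow> in_hilb S0 d0 (scale \<rho> v) \<longrightarrow>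
           in_hilb S1 d1 (scale \<sigma> (T v)) \<and> hnorm (scale \<sigma> (T v)) \<le> C * hnorm (scale \<rho> v)"
proof -
  define t where "t = Re \<rho> - Re \<sigma>"
  have t: "0 < t" using st unfolding t_def by simp
  obtain C where C: "C > 0" "\<And>l. l \<in> S0 \<inter> S1 \<Longrightarrow> opnorm (d0 l) (d1 l) (f l) < C * exp (t * l)"
    using B t by blast
  show ?thesis
  proof (intro exI[of _ C] conjI allI impI)
    show "0 < C" by (rule C(1))
    fix v assume v: "v \<in> prodE S0 d0" and h: "in_hilb S0 d0 (scale \<rho> v)"
    have nb: "nsq (scale \<sigma> (T v)) l \<le> C\<^sup>2 * nsq (scale \<rho> v) l" for l
    proof (cases "l \<in> S0 \<inter> S1")
      case True
      have o0: "0 \<le> opnorm (d0 l) (d1 l) (f l)" by (rule opnorm_nonneg[OF lin[OF True]])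
      have ob: "(opnorm (d0 l) (d1 l) (f l))\<^sup>2 \<le> (C * exp (t * l))\<^sup>2"
        using C(2)[OF True] o0 by (intro power_mono) auto
      have "nsq (scale \<sigma> (T v)) l = exp (2 * Re \<sigma> * l) * nsq (T v) l" by (rule nsq_scale)
      also have "\<dots> \<le> exp (2 * Re \<sigma> * l) * ((opnorm (d0 l) (d1 l) (f l))\<^sup>2 * nsq v l)"
        by (intro mult_left_mono T_nsq_in[OF v True]) simp
      also have "\<dots> \<le> exp (2 * Re \<sigma> * l) * ((C * exp (t * l))\<^sup>2 * nsq v l)"
        by (intro mult_left_mono mult_right_mono ob nsq_nonneg) simp
      also have "\<dots> = C\<^sup>2 * (exp (2 * Re \<sigma> * l) * (exp (t * l))\<^sup>2) * nsq v l"
        by (simp add: power_mult_distrib)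
      also have "exp (2 * Re \<sigma> * l) * (exp (t * l))\<^sup>2 = exp (2 * Re \<rho> * l)"
        unfolding t_def by (simp add: power2_eq_square exp_add[symmetric] algebra_simps)
      finally show ?thesis by (simp add: nsq_scale)
    next
      case False
      then show ?thesis by (simp add: nsq_scale T_nsq_out nsq_nonneg)
    qed
    have "in_hilb S1 d1 (scale \<sigma> (T v)) \<and> hnorm (scale \<sigma> (T v)) \<le> sqrt (C\<^sup>2) * hnorm (scale \<rho> v)"
      using dom[OF scale_prodE[OF v] scale_prodE[OF T_prodE[OF v]] h, of "C\<^sup>2"] nb by simp
    then show "in_hilb S1 d1 (scale \<sigma> (T v))" "hnorm (scale \<sigma> (T v)) \<le> C * hnorm (scale \<rho> v)"
      using C(1) by simp_all
  qed
qed

end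


context fsetup
begin

lemma T_checkE:
  assumes B: "\<forall>t>0. \<exists>C>0. \<forall>l\<in>S0 \<inter> S1. opnorm (d0 l) (d1 l) (f l) < C * exp (t * l)"
    and v: "v \<in> checkE S0 d0"
  shows "T v \<in> checkE S1 d1"
proof -
  obtain \<tau> where \<tau>: "0 < Re \<tau>" "in_hilb S0 d0 (scale \<tau> v)" using v unfolding checkE_def by blast
  have vp: "v \<in> prodE S0 d0" using v by (rule checkE_prodE)
  have "Re (\<tau> / 2) < Re \<tau>" using \<tau> by simp
  from TS[OF B this] obtain C where
    "\<forall>v. v \<in> prodE S0 d0 \<longrightarrow> in_hilb S0 d0 (scale \<tau> v) \<longrightarrow> in_hilb S1 d1 (scale (\<tau> / 2) (T v))"
    by blast
  then have "in_hilb S1 d1 (scale (\<tau> / 2) (T v))" using vp \<tau> by blast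
  moreover have "0 < Re (\<tau> / 2)" using \<tau> by simp
  ultimately show ?thesis unfolding checkE_def using T_prodE[OF vp] by blast
qed

lemma T_hatE:
  assumes B: "\<forall>t>0. \<exists>C>0. \<forall>l\<in>S0 \<inter> S1. opnorm (d0 l) (d1 l) (f l) < C * exp (t * l)"
    and v: "v \<in> hatE S0 d0"
  shows "T v \<in> hatE S1 d1"
proof -
  have vp: "v \<in> prodE S0 d0" using v by (rule hatE_prodE)
  have "in_hilb S1 d1 (scale (- \<tau>) (T v))" if "0 < Re \<tau>" for \<tau>
  proof -
    have "Re (- \<tau>) < Re (- (\<tau> / 2))" using that by simp
    from TS[OF B this] obtain C where
      "\<forall>v. v \<in> prodE S0 d0 \<longrightarrow> in_hilb S0 d0 (scale (- (\<tau> / 2)) v) \<longrightarrow> in_hilb S1 d1 (scale (- \<tau>) (T v))"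
      by blast
    moreover have "in_hilb S0 d0 (scale (- (\<tau> / 2)) v)" using v that unfolding hatE_def by simp
    ultimately show ?thesis using vp by blast
  qed
  then show ?thesis unfolding hatE_def using T_prodE[OF vp] by blast
qed

lemma check_cont:
  assumes B: "\<forall>t>0. \<exists>C>0. \<forall>l\<in>S0 \<inter> S1. opnorm (d0 l) (d1 l) (f l) < C * exp (t * l)"
  shows "continuous_map (check_top S0 d0) (check_top S1 d1) T"
proof -
  let ?G = "\<lambda>S d. {U. U \<subseteq> checkE S d \<and>
         (\<forall>v\<in>U. \<exists>W. absconv W \<and>
            (\<forall>\<tau>. 0 < Re \<tau> \<longrightarrow> (\<exists>\<epsilon>>0. \<forall>w. in_hilb S d w \<and> hnorm w < \<epsilon> \<longrightarrow> scale (- \<tau>) w \<in> W)) \<and>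
            fadd v ` W \<subseteq> U)}"
  have ct: "check_top S d = topology_generated_by (?G S d)" for S d unfolding check_top_def by simp
  have top0: "topspace (check_top S0 d0) = checkE S0 d0" by (rule top_check[OF sd0])
  have U1: "\<Union>(?G S1 d1) = checkE S1 d1"
    using top_check[OF sd1] unfolding ct topology_generated_by_topspace .
  show ?thesis
    unfolding ct[of S1 d1]
  proof (rule continuous_on_generated_topo)
    show "T ` topspace (check_top S0 d0) \<subseteq> \<Union>(?G S1 d1)"
      unfolding top0 U1 using T_checkE[OF B] by blast
  next
    fix U assume U: "U \<in> ?G S1 d1"
    let ?P = "T -` U \<inter> checkE S0 d0"
    have "?P \<in> ?G S0 d0"
    proof (rule CollectI, intro conjI ballI)
      show "?P \<subseteq> checkE S0 d0" by blast
      fix v assume vP: "v \<in> ?P"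
      then have v0: "v \<in> checkE S0 d0" and TvU: "T v \<in> U" by auto
      obtain W' where W': "absconv W'"
        "\<forall>\<tau>. 0 < Re \<tau> \<longrightarrow> (\<exists>\<epsilon>>0. \<forall>w. in_hilb S1 d1 w \<and> hnorm w < \<epsilon> \<longrightarrow> scale (- \<tau>) w \<in> W')"
        "fadd (T v) ` W' \<subseteq> U"
        using U TvU by blast
      define W where "W = {w \<in> checkE S0 d0. T w \<in> W'}"
      have "absconv W"
        unfolding absconv_def
      proof (intro ballI allI impI)
        fix x y a b assume x: "x \<in> W" and y: "y \<in> W" and ab: "cmod a + cmod b \<le> 1"
        have xc: "x \<in> checkE S0 d0" "T x \<in> W'" and yc: "y \<in> checkE S0 d0" "T y \<in> W'"
          using x y unfolding W_def by auto
        have "(\<lambda>l i. a * x l i + b * y l i) \<in> checkE S0 d0" by (rule checkE_lc[OF sd0 xc(1) yc(1)])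
        moreover have "T (\<lambda>l i. a * x l i + b * y l i) = (\<lambda>l i. a * T x l i + b * T y l i)"
          by (rule T_lc[OF checkE_prodE[OF xc(1)] checkE_prodE[OF yc(1)]])
        moreover have "(\<lambda>l i. a * T x l i + b * T y l i) \<in> W'"
          using W'(1) xc(2) yc(2) ab unfolding absconv_def by blast
        ultimately show "(\<lambda>l i. a * x l i + b * y l i) \<in> W" unfolding W_def by simp
      qed
      moreover have "\<forall>\<tau>. 0 < Re \<tau> \<longrightarrow> (\<exists>\<epsilon>>0. \<forall>w. in_hilb S0 d0 w \<and> hnorm w < \<epsilon> \<longrightarrow> scale (- \<tau>) w \<in> W)"
      proof (intro allI impI)
        fix \<tau> :: complex assume t: "0 < Re \<tau>"
        have t2: "0 < Re (\<tau> / 2)" using t by simp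
        obtain \<epsilon>' where e': "\<epsilon>' > 0" "\<And>u. in_hilb S1 d1 u \<Longrightarrow> hnorm u < \<epsilon>' \<Longrightarrow> scale (- (\<tau> / 2)) u \<in> W'"
          using W'(2) t2 by blast
        have "Re (\<tau> / 2) < Re \<tau>" using t by simp
        from TS[OF B this] obtain C where C: "C > 0"
          "\<And>v. v \<in> prodE S0 d0 \<Longrightarrow> in_hilb S0 d0 (scale \<tau> v) \<Longrightarrow>
             in_hilb S1 d1 (scale (\<tau> / 2) (T v)) \<and> hnorm (scale (\<tau> / 2) (T v)) \<le> C * hnorm (scale \<tau> v)"
          by blast
        show "\<exists>\<epsilon>>0. \<forall>w. in_hilb S0 d0 w \<and> hnorm w < \<epsilon> \<longrightarrow> scale (- \<tau>) w \<in> W"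
        proof (intro exI[of _ "\<epsilon>' / C"] conjI allI impI)
          show "0 < \<epsilon>' / C" using e' C by simp
          fix w assume w: "in_hilb S0 d0 w \<and> hnorm w < \<epsilon>' / C"
          define v' where "v' = scale (- \<tau>) w"
          have v'c: "v' \<in> checkE S0 d0" unfolding v'_def using hilb_checkE w t by blast
          have sv: "scale \<tau> v' = w" unfolding v'_def by (simp add: scale_scale scale_zero)
          have h: "in_hilb S1 d1 (scale (\<tau> / 2) (T v'))" and hn: "hnorm (scale (\<tau> / 2) (T v')) \<le> C * hnorm w"
            using C(2)[OF checkE_prodE[OF v'c]] sv w by auto
          have "C * hnorm w < \<epsilon>'" using w C(1) by (simp add: field_simps)
          then have "scale (- (\<tau> / 2)) (scale (\<tau> / 2) (T v')) \<in> W'"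
            using e'(2)[OF h] hn by simp
          then have "T v' \<in> W'" by (simp add: scale_scale scale_zero)
          then show "scale (- \<tau>) w \<in> W" using v'c unfolding W_def v'_def by simp
        qed
      qed
      moreover have "fadd v ` W \<subseteq> ?P"
      proof
        fix z assume "z \<in> fadd v ` W"
        then obtain w where w: "w \<in> W" and z: "z = fadd v w" by blast
        have wc: "w \<in> checkE S0 d0" "T w \<in> W'" using w unfolding W_def by auto
        have "z \<in> checkE S0 d0" unfolding z fadd_lc by (rule checkE_lc[OF sd0 v0 wc(1)])
        moreover have "T z = fadd (T v) (T w)"
          unfolding z fadd_lc by (rule T_lc[OF checkE_prodE[OF v0] checkE_prodE[OF wc(1)]])
        ultimately show "z \<in> ?P" using W'(3) wc(2) by auto
      qed
      ultimately show "\<exists>W. absconv W \<and>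
            (\<forall>\<tau>. 0 < Re \<tau> \<longrightarrow> (\<exists>\<epsilon>>0. \<forall>w. in_hilb S0 d0 w \<and> hnorm w < \<epsilon> \<longrightarrow> scale (- \<tau>) w \<in> W)) \<and>
            fadd v ` W \<subseteq> ?P" by blast
    qed
    then show "openin (check_top S0 d0) (T -` U \<inter> topspace (check_top S0 d0))"
      unfolding top0 unfolding ct[of S0 d0] by (rule topology_generated_by_Basis)
  qed
qed

end


context fsetup
begin

lemma hat_cont:
  assumes B: "\<forall>t>0. \<exists>C>0. \<forall>l\<in>S0 \<inter> S1. opnorm (d0 l) (d1 l) (f l) < C * exp (t * l)"
  shows "continuous_map (hat_top S0 d0) (hat_top S1 d1) T"
proof -
  let ?G = "\<lambda>S d. {{w \<in> hatE S d. hnorm (scale (- tau_seq i) (fdiff w v)) < \<epsilon>} | v i \<epsilon>.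
        v \<in> hatE S d \<and> 0 < \<epsilon>}"
  have ht: "hat_top S d = topology_generated_by (?G S d)" for S d unfolding hat_top_def by simp
  have U1: "\<Union>(?G S1 d1) = hatE S1 d1"
    using top_hat[of S1 d1] unfolding ht topology_generated_by_topspace .
  show ?thesis
    unfolding ht[of S1 d1]
  proof (rule continuous_on_generated_topo)
    show "T ` topspace (hat_top S0 d0) \<subseteq> \<Union>(?G S1 d1)"
      unfolding top_hat U1 using T_hatE[OF B] by blast
  next
    fix U assume "U \<in> ?G S1 d1"
    then obtain v' i \<epsilon> where U: "U = {w \<in> hatE S1 d1. hnorm (scale (- tau_seq i) (fdiff w v')) < \<epsilon>}"
      and v': "v' \<in> hatE S1 d1" and e: "0 < \<epsilon>" by blast
    let ?P = "T -` U \<inter> hatE S0 d0"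
    define \<sigma> where "\<sigma> = - tau_seq i"
    define \<rho> where "\<rho> = - tau_seq (Suc (2 * i))"
    have sr: "Re \<sigma> < Re \<rho>" unfolding \<sigma>_def \<rho>_def tau_seq_def by (simp add: field_simps)
    from TS[OF B sr] obtain C where C: "C > 0"
      "\<And>v. v \<in> prodE S0 d0 \<Longrightarrow> in_hilb S0 d0 (scale \<rho> v) \<Longrightarrow>
         in_hilb S1 d1 (scale \<sigma> (T v)) \<and> hnorm (scale \<sigma> (T v)) \<le> C * hnorm (scale \<rho> v)"
      by blast
    have ti: "0 < Re (tau_seq k)" for k unfolding tau_seq_def by simp
    have "\<exists>V. openin (hat_top S0 d0) V \<and> v \<in> V \<and> V \<subseteq> ?P" if vP: "v \<in> ?P" for v
    proof -
      have v0: "v \<in> hatE S0 d0" and Tv: "T v \<in> U" using vP by auto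
      define r where "r = \<epsilon> - hnorm (scale \<sigma> (fdiff (T v) v'))"
      have r: "0 < r" using Tv unfolding U r_def \<sigma>_def by simp
      define V where "V = {w \<in> hatE S0 d0. hnorm (scale (- tau_seq (Suc (2 * i))) (fdiff w v)) < r / C}"
      have "V \<in> ?G S0 d0" unfolding V_def using v0 r C(1)
        apply (intro CollectI exI[of _ v] exI[of _ "Suc (2 * i)"] exI[of _ "r / C"])
        by simp
      then have "openin (hat_top S0 d0) V" unfolding ht[of S0 d0] by (rule topology_generated_by_Basis)
      moreover have "v \<in> V" unfolding V_def using v0 r C(1) by (simp add: fdiff_same scale_0fam hnorm_zero)
      moreover have "V \<subseteq> ?P"
      proof
        fix w assume wV: "w \<in> V"
        then have w0: "w \<in> hatE S0 d0" and wn: "hnorm (scale \<rho> (fdiff w v)) < r / C"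
          unfolding V_def \<rho>_def by auto
        have x0: "fdiff w v \<in> hatE S0 d0" unfolding fdiff_lc by (rule hatE_lc[OF w0 v0])
        have xh: "in_hilb S0 d0 (scale \<rho> (fdiff w v))" using x0 ti unfolding hatE_def \<rho>_def by blast
        have Tx: "T (fdiff w v) = fdiff (T w) (T v)"
          unfolding fdiff_lc by (rule T_lc[OF hatE_prodE[OF w0] hatE_prodE[OF v0]])
        have h1: "in_hilb S1 d1 (scale \<sigma> (fdiff (T w) (T v)))"
          and n1: "hnorm (scale \<sigma> (fdiff (T w) (T v))) \<le> C * hnorm (scale \<rho> (fdiff w v))"
          using C(2)[OF hatE_prodE[OF x0] xh] unfolding Tx by auto
        have "C * hnorm (scale \<rho> (fdiff w v)) < r" using wn C(1) by (simp add: field_simps)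
        with n1 have n1': "hnorm (scale \<sigma> (fdiff (T w) (T v))) < r" by simp
        have Tw: "T w \<in> hatE S1 d1" by (rule T_hatE[OF B w0])
        have Tv1: "T v \<in> hatE S1 d1" by (rule T_hatE[OF B v0])
        have y1: "fdiff (T v) v' \<in> hatE S1 d1" unfolding fdiff_lc by (rule hatE_lc[OF Tv1 v'])
        have h2: "in_hilb S1 d1 (scale \<sigma> (fdiff (T v) v'))" using y1 ti unfolding hatE_def \<sigma>_def by blast
        have eq: "fdiff (T w) v' = fadd (fdiff (T w) (T v)) (fdiff (T v) v')"
          unfolding fadd_def fdiff_def by simp
        have "hnorm (scale \<sigma> (fdiff (T w) v'))
            \<le> hnorm (scale \<sigma> (fdiff (T w) (T v))) + hnorm (scale \<sigma> (fdiff (T v) v'))"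
          unfolding eq scale_fadd by (rule hnorm_tri[OF h1 h2])
        also have "\<dots> < r + hnorm (scale \<sigma> (fdiff (T v) v'))" using n1' by simp
        also have "\<dots> = \<epsilon>" unfolding r_def by simp
        finally have "hnorm (scale (- tau_seq i) (fdiff (T w) v')) < \<epsilon>" unfolding \<sigma>_def .
        then show "w \<in> ?P" using Tw w0 unfolding U by simp
      qed
      ultimately show ?thesis by blast
    qed
    then have "openin (hat_top S0 d0) ?P" by (subst openin_subopen) blast
    then show "openin (hat_top S0 d0) (T -` U \<inter> topspace (hat_top S0 d0))" unfolding top_hat .
  qed
qed

end


primrec pick :: "(real \<Rightarrow> real \<Rightarrow> bool) \<Rightarrow> nat \<Rightarrow> real" where
  "pick G 0 = (SOME l. G l 0)"
| "pick G (Suc k) = (SOME l. G l (pick G k + 1))"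

lemma pick_prop:
  assumes "\<And>B. \<exists>l. G l B"
  shows "G (pick G 0) 0" "G (pick G (Suc k)) (pick G k + 1)"
  using someI_ex[OF assms[of 0]] someI_ex[OF assms[of "pick G k + 1"]] by simp_all

lemma not_summable_ge1:
  fixes g :: "'a \<Rightarrow> real"
  assumes s: "g summable_on A" and g: "\<And>x. x \<in> A \<Longrightarrow> 1 \<le> g x" and inf: "infinite A"
  shows False
proof -
  obtain F where F: "finite F" "card F = nat \<lceil>infsum g A\<rceil> + 1" "F \<subseteq> A"
    using infinite_arbitrarily_large[OF inf] by blast
  have "real (card F) = (\<Sum>x\<in>F. 1)" by simp
  also have "\<dots> \<le> sum g F" using F(3) g by (intro sum_mono) auto
  also have "\<dots> \<le> infsum g A"
    by (rule finite_sum_le_infsum[OF s F(1) F(3)]) (use g in force)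
  finally have "real (card F) \<le> infsum g A" .
  moreover have "infsum g A < real (card F)" unfolding F(2)
  proof -
    have "infsum g A \<le> real (nat \<lceil>infsum g A\<rceil>)" by (rule real_nat_ceiling_ge)
    then show "infsum g A < real (nat \<lceil>infsum g A\<rceil> + 1)" by simp
  qed
  ultimately show False by simp
qed


context fsetup
begin

lemma nec:
  assumes H: "\<forall>v\<in>checkE S0 d0. T v \<in> checkE S1 d1" and t: "t > 0"
  shows "\<exists>C>0. \<forall>l\<in>S0 \<inter> S1. opnorm (d0 l) (d1 l) (f l) < C * exp (t * l)"
proof (rule ccontr)
  assume neg: "\<not> ?thesis"
  then have neg': "\<And>C. C > 0 \<Longrightarrow> \<exists>l\<in>S0 \<inter> S1. C * exp (t * l) \<le> opnorm (d0 l) (d1 l) (f l)"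
    by (meson not_less)
  define good where "good l \<longleftrightarrow> l \<in> S0 \<inter> S1 \<and>
      (\<exists>x\<in>eig (d0 l). vnorm (d0 l) x \<le> 1 \<and> exp (t * l) < vnorm (d1 l) (f l x))" for l
  have ex: "\<exists>l. good l \<and> B \<le> l" for B
  proof -
    define F where "F = {l \<in> S0. l \<le> B} \<inter> S1"
    have fF: "finite F" using sd0 unfolding spectral_data_def F_def by blast
    define K where "K = (\<Sum>l\<in>F. \<bar>opnorm (d0 l) (d1 l) (f l)\<bar> * exp (- t * l))"
    have K0: "0 \<le> K" unfolding K_def by (rule sum_nonneg) simp
    obtain l where l: "l \<in> S0 \<inter> S1" and big: "(K + 2) * exp (t * l) \<le> opnorm (d0 l) (d1 l) (f l)"
      using neg'[of "K + 2"] K0 by auto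
    have o: "(K + 2) \<le> opnorm (d0 l) (d1 l) (f l) * exp (- t * l)"
    proof -
      have "K + 2 \<le> opnorm (d0 l) (d1 l) (f l) / exp (t * l)" using big by (simp add: pos_le_divide_eq)
      then show ?thesis by (simp add: exp_minus divide_inverse)
    qed
    have Bl: "B \<le> l"
    proof (rule ccontr)
      assume "\<not> B \<le> l"
      then have lF: "l \<in> F" using l unfolding F_def by auto
      have "\<bar>opnorm (d0 l) (d1 l) (f l)\<bar> * exp (- t * l) \<le> K"
        unfolding K_def by (rule member_le_sum[OF lF _ fF]) simp
      moreover have "opnorm (d0 l) (d1 l) (f l) * exp (- t * l) \<le> \<bar>opnorm (d0 l) (d1 l) (f l)\<bar> * exp (- t * l)"
        by (intro mult_right_mono) auto
      ultimately show False using o by (simp add: abs_of_nonneg[OF opnorm_nonneg[OF lin[OF l]]])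
    qed
    have "exp (t * l) < (K + 2) * exp (t * l)" using K0 by simp
    then have "exp (t * l) < opnorm (d0 l) (d1 l) (f l)" using big by linarith
    then obtain x where "x \<in> eig (d0 l)" "vnorm (d0 l) x \<le> 1" "exp (t * l) < vnorm (d1 l) (f l x)"
      using opnorm_approx[OF lin[OF l]] by blast
    then have "good l" unfolding good_def using l by blast
    then show ?thesis using Bl by blast
  qed
  define G where "G l B \<longleftrightarrow> good l \<and> B \<le> l" for l B
  define lam where "lam = pick G"
  have Gex: "\<And>B. \<exists>l. G l B" unfolding G_def using ex by blast
  have G0: "good (lam 0)" "0 \<le> lam 0" using pick_prop(1)[of G, OF Gex] unfolding G_def lam_def by auto
  have GS: "good (lam (Suc k))" "lam k + 1 \<le> lam (Suc k)" for k
    using pick_prop(2)[of G, OF Gex] unfolding G_def lam_def by auto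
  have lamk: "real k \<le> lam k" for k
  proof (induction k)
    case 0 then show ?case using G0 by simp
  next
    case (Suc k) then show ?case using GS(2)[of k] by simp
  qed
  have gl: "good (lam k)" for k using G0 GS by (cases k) auto
  have sm: "strict_mono lam"
  proof (rule strict_mono_Suc_iff[THEN iffD2], intro allI)
    fix k show "lam k < lam (Suc k)" using GS(2)[of k] by linarith
  qed
  have inj: "inj lam" using sm strict_mono_imp_inj_on by blast
  define L where "L = range lam"
  have infL: "infinite L"
  proof
    assume "finite L"
    then have "finite (UNIV :: nat set)" unfolding L_def using finite_imageD inj by blast
    then show False by simp
  qed
  have Lgood: "l \<in> L \<Longrightarrow> good l" for l unfolding L_def using gl by blast
  have Lpos: "0 \<le> l" if lL: "l \<in> L" for l
  proof -
    obtain k where "l = lam k" using lL unfolding L_def by blast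
    moreover have "0 \<le> real k" by simp
    ultimately show ?thesis using lamk[of k] by linarith
  qed
  define xs where "xs l = (SOME x. x \<in> eig (d0 l) \<and> vnorm (d0 l) x \<le> 1 \<and> exp (t * l) < vnorm (d1 l) (f l x))" for l
  have xsP: "xs l \<in> eig (d0 l) \<and> vnorm (d0 l) (xs l) \<le> 1 \<and> exp (t * l) < vnorm (d1 l) (f l (xs l))"
    if "l \<in> L" for l
  proof -
    have "\<exists>x. x \<in> eig (d0 l) \<and> vnorm (d0 l) x \<le> 1 \<and> exp (t * l) < vnorm (d1 l) (f l x)"
      using Lgood[OF that] unfolding good_def by blast
    then show ?thesis unfolding xs_def by (rule someI_ex)
  qed
  have LL: "l \<in> L \<Longrightarrow> l \<in> S0 \<inter> S1" for l using Lgood unfolding good_def by blast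
  define v where "v l = (if l \<in> L then (\<lambda>i. complex_of_real (exp (- t * l)) * xs l i) else (\<lambda>i. 0))" for l
  have vl_eig: "v l \<in> eig (d0 l)" if "l \<in> L" for l
    using xsP[OF that] that unfolding v_def eig_def by simp
  have vp: "v \<in> prodE S0 d0"
    unfolding prodE_def
  proof (intro CollectI allI)
    fix l show "v l \<in> eig (if l \<in> S0 then d0 l else 0)"
    proof (cases "l \<in> L")
      case True then show ?thesis using vl_eig LL by auto
    next
      case False then show ?thesis unfolding v_def eig_def by simp
    qed
  qed
  have nsqv: "nsq v l \<le> exp (- t * l) ^ 2" if "l \<in> L" for l
  proof -
    have e1: "nsq v l = (vnorm (d0 l) (v l))\<^sup>2" using nsq_eig[of v l "d0 l", OF vl_eig[OF that]] by (simp add: vnorm_sq)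
    have e2: "vnorm (d0 l) (v l) = exp (- t * l) * vnorm (d0 l) (xs l)"
      using that unfolding v_def by (simp add: vnorm_smult)
    have e3: "exp (- t * l) * vnorm (d0 l) (xs l) \<le> exp (- t * l)" using xsP[OF that] by (simp add: mult_left_le_one_le vnorm_nonneg)
    have "(vnorm (d0 l) (v l))\<^sup>2 \<le> (exp (- t * l))\<^sup>2"
      by (rule power_mono) (use e2 e3 vnorm_nonneg in auto)
    then show ?thesis using e1 by simp
  qed
  have vnot: "l \<notin> L \<Longrightarrow> nsq v l = 0" for l unfolding v_def nsq_def by simp
  define g where "g l = (if l \<in> L then exp (- t * l) else 0)" for l
  have gsum: "g summable_on UNIV"
  proof -
    have geo: "(\<lambda>k::nat. exp (- t) ^ k) summable_on UNIV"
      by (rule summable_nonneg_imp_summable_on) (auto intro: summable_geometric simp: t)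
    have "(\<lambda>k. exp (- t * lam k)) summable_on UNIV"
    proof (rule summable_on_comparison_test[OF geo])
      fix k :: nat
      have "exp (- t * lam k) \<le> exp (- t * real k)" using lamk[of k] t by simp
      also have "\<dots> = exp (- t) ^ k" by (metis exp_of_nat2_mult mult.commute)
      finally show "exp (- t * lam k) \<le> exp (- t) ^ k" .
    qed simp
    then have "(\<lambda>l. exp (- t * l)) summable_on L"
      unfolding L_def using summable_on_reindex[OF inj_on_subset[OF inj subset_UNIV], of "\<lambda>l. exp (- t * l)"]
      by (simp add: comp_def)
    then show ?thesis unfolding g_def
      by (rule summable_on_cong_neutral[THEN iffD1, rotated -1]) auto
  qed
  have vc: "v \<in> checkE S0 d0"
  proof -
    have "nsq (scale (complex_of_real (t / 2)) v) summable_on UNIV"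
    proof (rule summable_on_comparison_test[OF gsum])
      fix l
      show "nsq (scale (complex_of_real (t / 2)) v) l \<le> g l"
      proof (cases "l \<in> L")
        case True
        have "nsq (scale (complex_of_real (t / 2)) v) l = exp (t * l) * nsq v l" by (simp add: nsq_scale)
        also have "\<dots> \<le> exp (t * l) * exp (- t * l) ^ 2" by (intro mult_left_mono nsqv[OF True]) simp
        also have "\<dots> = exp (- t * l)" by (simp add: power2_eq_square exp_add[symmetric])
        finally show ?thesis unfolding g_def using True by simp
      next
        case False
        then show ?thesis unfolding g_def by (simp add: nsq_scale vnot)
      qed
    qed (simp add: nsq_nonneg)
    then have "in_hilb S0 d0 (scale (complex_of_real (t / 2)) v)"
      using hilb_iff[OF scale_prodE[OF vp]] by blast
    then show ?thesis unfolding checkE_def using vp t by force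
  qed
  have "T v \<notin> checkE S1 d1"
  proof
    assume "T v \<in> checkE S1 d1"
    then obtain \<tau> where \<tau>: "0 < Re \<tau>" "in_hilb S1 d1 (scale \<tau> (T v))" unfolding checkE_def by blast
    have q: "nsq (scale \<tau> (T v)) summable_on UNIV"
      using \<tau>(2) hilb_iff[OF scale_prodE[OF T_prodE[OF vp]]] by blast
    then have qL: "nsq (scale \<tau> (T v)) summable_on L" by (rule summable_on_subset_banach) simp
    have ge1: "1 \<le> nsq (scale \<tau> (T v)) l" if lL: "l \<in> L" for l
    proof -
      have l01: "l \<in> S0 \<inter> S1" using LL[OF lL] .
      have xe: "xs l \<in> eig (d0 l)" using xsP[OF lL] by blast
      have fe: "f l (v l) \<in> eig (d1 l)" using maps[OF l01] vl_eig[OF lL] by blast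
      have "f l (v l) = (\<lambda>i. complex_of_real (exp (- t * l)) * f l (xs l) i)"
        using lL unfolding v_def by (simp add: lin_smult[OF lin[OF l01] xe])
      then have vn: "vnorm (d1 l) (f l (v l)) = exp (- t * l) * vnorm (d1 l) (f l (xs l))"
        by (simp add: vnorm_smult)
      have "exp (- t * l) * exp (t * l) < exp (- t * l) * vnorm (d1 l) (f l (xs l))"
        using xsP[OF lL] by simp
      then have "1 < vnorm (d1 l) (f l (v l))" unfolding vn by (simp add: exp_add[symmetric])
      then have "1 < (vnorm (d1 l) (f l (v l)))\<^sup>2" by (simp add: one_less_power)
      also have "\<dots> = nsq (T v) l"
        using nsq_eig[of "T v" l "d1 l"] fe l01 by (simp add: T_in vnorm_sq)
      also have "\<dots> \<le> exp (2 * Re \<tau> * l) * nsq (T v) l"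
      proof -
        have "0 \<le> 2 * Re \<tau> * l" using Lpos[OF lL] \<tau>(1) by simp
        then have "1 \<le> exp (2 * Re \<tau> * l)" by simp
        from mult_right_mono[OF this nsq_nonneg[of "T v" l]] show ?thesis by simp
      qed
      finally show ?thesis by (simp add: nsq_scale)
    qed
    show False by (rule not_summable_ge1[OF qL ge1 infL])
  qed
  then show False using H vc by blast
qed

end


theorem lemma3p40:
  fixes S0 S1 :: "real set" and d0 d1 :: "real \<Rightarrow> nat"
    and f :: "real \<Rightarrow> (nat \<Rightarrow> complex) \<Rightarrow> (nat \<Rightarrow> complex)"
  assumes "spectral_data S0 d0" and "spectral_data S1 d1"
    and "\<And>l. l \<in> S0 \<inter> S1 \<Longrightarrow> lin_on (eig (d0 l)) (f l)"
    and "\<And>l. l \<in> S0 \<inter> S1 \<Longrightarrow> f l ` eig (d0 l) \<subseteq> eig (d1 l)"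
  shows "(\<exists>fc fh.
            continuous_map (check_top S0 d0) (check_top S1 d1) fc \<and> lin_fam (checkE S0 d0) fc \<and>
            continuous_map (hat_top S0 d0) (hat_top S1 d1) fh \<and> lin_fam (hatE S0 d0) fh \<and>
            (\<forall>v\<in>checkE S0 d0. fh v = fc v) \<and>
            (\<forall>v\<in>checkE S0 d0. fHilb S0 S1 f v = fc v))
       \<longleftrightarrow> (\<forall>t>0. \<exists>C>0. \<forall>l\<in>S0 \<inter> S1. opnorm (d0 l) (d1 l) (f l) < C * exp (t * l))"
proof -
  interpret fsetup S0 S1 d0 d1 f
    by (unfold_locales) (use assms in auto)
  show ?thesis
  proof
    assume "\<exists>fc fh.
            continuous_map (check_top S0 d0) (check_top S1 d1) fc \<and> lin_fam (checkE S0 d0) fc \<and>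
            continuous_map (hat_top S0 d0) (hat_top S1 d1) fh \<and> lin_fam (hatE S0 d0) fh \<and>
            (\<forall>v\<in>checkE S0 d0. fh v = fc v) \<and>
            (\<forall>v\<in>checkE S0 d0. fHilb S0 S1 f v = fc v)"
    then obtain fc where cc: "continuous_map (check_top S0 d0) (check_top S1 d1) fc"
      and eq: "\<forall>v\<in>checkE S0 d0. fHilb S0 S1 f v = fc v" by blast
    have "fc ` checkE S0 d0 \<subseteq> checkE S1 d1"
      using continuous_map_image_subset_topspace[OF cc] unfolding top_check[OF sd0] top_check[OF sd1] .
    then have "\<forall>v\<in>checkE S0 d0. T v \<in> checkE S1 d1" using eq by auto
    then show "\<forall>t>0. \<exists>C>0. \<forall>l\<in>S0 \<inter> S1. opnorm (d0 l) (d1 l) (f l) < C * exp (t * l)"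
      using nec by blast
  next
    assume B: "\<forall>t>0. \<exists>C>0. \<forall>l\<in>S0 \<inter> S1. opnorm (d0 l) (d1 l) (f l) < C * exp (t * l)"
    have l1: "lin_fam (checkE S0 d0) T"
      unfolding lin_fam_def using T_lc checkE_prodE by blast
    have l2: "lin_fam (hatE S0 d0) T"
      unfolding lin_fam_def using T_lc hatE_prodE by blast
    show "\<exists>fc fh.
            continuous_map (check_top S0 d0) (check_top S1 d1) fc \<and> lin_fam (checkE S0 d0) fc \<and>
            continuous_map (hat_top S0 d0) (hat_top S1 d1) fh \<and> lin_fam (hatE S0 d0) fh \<and>
            (\<forall>v\<in>checkE S0 d0. fh v = fc v) \<and>
            (\<forall>v\<in>checkE S0 d0. fHilb S0 S1 f v = fc v)"
      using check_cont[OF B] hat_cont[OF B] l1 l2 by blast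
  qed
qed

end
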